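(* Let $K$ be a field and $K[x,x^{-1}]$ the Laurent polynomial algebra, with involution ${}^\natural$ on $\mathbb{M}_2(K[x,x^{-1}])$ given by $\big((f_{ij}(x))\big)^\natural=(f_{ji}(x^{-1}))$. Let $\mathbf{K}_{\mathbb{M}_2(K[x,x^{-1}])}=\{X: X^\natural=-X\}$. Then: (1) If $\mathrm{char}(K)=2$, then $\mathbf{K}_{\mathbb{M}_2(K[x,x^{-1}])}$ is Lie solvable of index $3$ but not Lie nilpotent. (2) If $\mathrm{char}(K)\neq 2$, then $\mathbf{K}_{\mathbb{M}_2(K[x,x^{-1}])}$ is not Lie solvable.
   Context: Lie bracket $[a,b]=ab-ba$; $[S,T]=\mathrm{span}_K\{ab-ba:a\in S,b\in T\}$. For a Lie subalgebra $\mathcal{L}$: $\mathcal{L}^{(0)}=\mathcal{L}$, $\mathcal{L}^{(n)}=[\mathcal{L}^{(n-1)},\mathcal{L}^{(n-1)}]$; $\mathcal{L}^0=\mathcal{L}$, $\mathcal{L}^n=[\mathcal{L}^{n-1},\mathcal{L}]$. Lie solvable (resp. nilpotent) means $\mathcal{L}^{(n)}=0$ (resp. $\mathcal{L}^n=0$) for some $n$; the index of solvability is the smallest such $n$. *)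

theory Defs
  imports "HOL-Analysis.Analysis" "HOL-Library.Poly_Mapping"
begin

text \<open>Laurent polynomials K[x,x^-1] are the group algebra K[Z], i.e. finitely supported
 functions int =>0 K with convolution product (coefficient at n = coefficient of x^n).
 2x2 matrices over them: type (int =>0 K)^2^2 with matrix product (**).\<close>

type_synonym 'a laurent = "int \<Rightarrow>\<^sub>0 'a"
type_synonym 'a lmat2 = "'a laurent ^ 2 ^ 2"

definition lbar :: "'a::zero laurent \<Rightarrow> 'a laurent" where
  "lbar f = Abs_poly_mapping (\<lambda>n. Poly_Mapping.lookup f (- n))"

definition natinv :: "'a::zero lmat2 \<Rightarrow> 'a lmat2" where
  "natinv A = (\<chi> i j. lbar (A $ j $ i))"

definition skewK :: "'a::field lmat2 set" where
  "skewK = {X. natinv X = - X}"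

definition ksmul :: "'a::field \<Rightarrow> 'a lmat2 \<Rightarrow> 'a lmat2" where
  "ksmul c A = (\<chi> i j. Poly_Mapping.single 0 c * A $ i $ j)"

inductive_set kspan :: "'a::field lmat2 set \<Rightarrow> 'a lmat2 set" for S where
  kspan_zero: "0 \<in> kspan S"
| kspan_gen: "a \<in> S \<Longrightarrow> a \<in> kspan S"
| kspan_add: "a \<in> kspan S \<Longrightarrow> b \<in> kspan S \<Longrightarrow> a + b \<in> kspan S"
| kspan_smul: "a \<in> kspan S \<Longrightarrow> ksmul c a \<in> kspan S"

definition lie_bracket :: "'a::field lmat2 \<Rightarrow> 'a lmat2 \<Rightarrow> 'a lmat2" where
  "lie_bracket a b = a ** b - b ** a"

definition lie_brk_set :: "'a::field lmat2 set \<Rightarrow> 'a lmat2 set \<Rightarrow> 'a lmat2 set" where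
  "lie_brk_set S T = kspan {lie_bracket a b | a b. a \<in> S \<and> b \<in> T}"

fun derived :: "'a::field lmat2 set \<Rightarrow> nat \<Rightarrow> 'a lmat2 set" where
  "derived L 0 = L"
| "derived L (Suc n) = lie_brk_set (derived L n) (derived L n)"

fun lower_central :: "'a::field lmat2 set \<Rightarrow> nat \<Rightarrow> 'a lmat2 set" where
  "lower_central L 0 = L"
| "lower_central L (Suc n) = lie_brk_set (lower_central L n) L"

definition lie_solvable :: "'a::field lmat2 set \<Rightarrow> bool" where
  "lie_solvable L \<longleftrightarrow> (\<exists>n. derived L n = {0})"

definition lie_nilpotent :: "'a::field lmat2 set \<Rightarrow> bool" where
  "lie_nilpotent L \<longleftrightarrow> (\<exists>n. lower_central L n = {0})"

definition solvability_index :: "'a::field lmat2 set \<Rightarrow> nat" where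
  "solvability_index L = (LEAST n. derived L n = {0})"

end

theory Submission imports Defs begin

definition M :: "'a laurent \<Rightarrow> 'a laurent \<Rightarrow> 'a laurent \<Rightarrow> 'a laurent \<Rightarrow> 'a lmat2" where
  "M a b c d = (\<chi> i j. if i = 1 then (if j = 1 then a else b) else (if j = 1 then c else d))"

lemma M_nth[simp]: "M a b c d $ 1 $ 1 = a" "M a b c d $ 1 $ 2 = b" "M a b c d $ 2 $ 1 = c" "M a b c d $ 2 $ 2 = d"
  by (simp_all add: M_def)

lemma M_eta: "A = M (A$1$1) (A$1$2) (A$2$1) (A$2$2)"
  unfolding vec_eq_iff forall_2 by simp

lemma M_eq: "M a b c d = M a' b' c' d' \<longleftrightarrow> a = a' \<and> b = b' \<and> c = c' \<and> d = d'"
  unfolding vec_eq_iff forall_2 by simp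

lemma M_mult: "M a b c d ** M (e::'a::comm_ring_1 laurent) f g h = M (a*e+b*g) (a*f+b*h) (c*e+d*g) (c*f+d*h)"
  unfolding vec_eq_iff forall_2 by (simp add: matrix_matrix_mult_def UNIV_2)

lemma M_diff: "M a b c d - M e f g h = M (a-e) (b-f) (c-g) (d-h)"
  unfolding vec_eq_iff forall_2 by simp

lemma M_add: "M a b c d + M e f g h = M (a+e) (b+f) (c+g) (d+h)"
  unfolding vec_eq_iff forall_2 by simp

lemma M_uminus: "- M a b c d = M (-a) (-b) (-c) (-d)"
  unfolding vec_eq_iff forall_2 by simp

lemma M_zero: "0 = M 0 0 0 0"
  unfolding vec_eq_iff forall_2 by simp

lemma M_eq_0[simp]: "M a b c d = 0 \<longleftrightarrow> a = 0 \<and> b = 0 \<and> c = 0 \<and> d = 0"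
  unfolding vec_eq_iff forall_2 by simp

lemma M_ksmul: "ksmul k (M a b c d) = M (Poly_Mapping.single 0 k * a) (Poly_Mapping.single 0 k * b) (Poly_Mapping.single 0 k * c) (Poly_Mapping.single 0 k * d)"
  unfolding vec_eq_iff forall_2 ksmul_def by simp

lemma M_natinv: "natinv (M a b c d) = M (lbar a) (lbar c) (lbar b) (lbar d)"
  unfolding vec_eq_iff forall_2 natinv_def by simp

lemma M_bracket: "lie_bracket (M a b c d) (M (e::'a::field laurent) f g h) =
   M (b*g - f*c) (a*f+b*h - (e*b+f*d)) (c*e+d*g - (g*a+h*c)) (c*f - g*b)"
  unfolding lie_bracket_def M_mult M_diff M_eq by (simp add: algebra_simps)

lemma lookup_lbar[simp]: "Poly_Mapping.lookup (lbar f) n = Poly_Mapping.lookup f (-n)"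
proof -
  have "finite {n. Poly_Mapping.lookup f (-n) \<noteq> 0}"
  proof -
    have "{n. Poly_Mapping.lookup f (-n) \<noteq> 0} = uminus ` {n. Poly_Mapping.lookup f n \<noteq> 0}"
      by (auto intro: image_eqI[where x="- _"])
    thus ?thesis using finite_lookup by (metis finite_imageI)
  qed
  thus ?thesis unfolding lbar_def by (simp add: Abs_poly_mapping_inverse)
qed

lemma lbar_lbar[simp]: "lbar (lbar f) = f"
  by (rule poly_mapping_eqI) simp
lemma lbar_add[simp]: "lbar (f + g) = lbar f + lbar (g::'a::monoid_add laurent)"
  by (rule poly_mapping_eqI) (simp add: lookup_add)
lemma lbar_diff[simp]: "lbar (f - g) = lbar f - lbar (g::'a::ab_group_add laurent)"
  by (rule poly_mapping_eqI) (simp add: lookup_minus)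
lemma lbar_uminus[simp]: "lbar (- g) = - lbar (g::'a::ab_group_add laurent)"
  by (rule poly_mapping_eqI) simp
lemma lbar_single[simp]: "lbar (Poly_Mapping.single k v) = Poly_Mapping.single (-k) v"
  by (rule poly_mapping_eqI) (auto simp: lookup_single when_def)
lemma lbar_zero[simp]: "lbar 0 = 0"
  by (rule poly_mapping_eqI) simp
lemma lbar_one[simp]: "lbar (1::'a::{zero_neq_one} laurent) = 1"
  by (rule poly_mapping_eqI) (auto simp: lookup_one when_def)


lemma brk_mem: "a \<in> S \<Longrightarrow> b \<in> T \<Longrightarrow> lie_bracket a b \<in> lie_brk_set S T"
  unfolding lie_brk_set_def by (rule kspan_gen) blast

lemma kspan_sub:
  assumes "T \<subseteq> V" "0 \<in> V" "\<And>a b. a\<in>V \<Longrightarrow> b\<in>V \<Longrightarrow> a+b\<in>V" "\<And>c a. a\<in>V \<Longrightarrow> ksmul c a \<in> V"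
  shows "kspan T \<subseteq> V"
proof
  fix x assume "x \<in> kspan T" then show "x \<in> V"
    by induct (use assms in auto)
qed

lemma two_laurent: "(2::'a::field laurent) = Poly_Mapping.single 0 2"
proof -
  have "(2::'a laurent) = 1 + 1" by simp
  also have "\<dots> = Poly_Mapping.single 0 (1+1)"
    by (simp add: one_poly_mapping.abs_eq single.abs_eq[symmetric] single_add[symmetric])
  finally show ?thesis by simp
qed

lemma char2_neg:
  assumes "(2::'a::field) = 0" shows "- (f::'a laurent) = f"
proof (rule poly_mapping_eqI)
  fix n
  have "\<And>z::'a. - z = z" using assms by (metis add_eq_0_iff2 mult_2 mult_zero_left)
  thus "Poly_Mapping.lookup (- f) n = Poly_Mapping.lookup f n" by simp
qed

lemma char2_iff: "CHAR('a::field) = 2 \<longleftrightarrow> (2::'a) = 0"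
proof
  assume "CHAR('a) = 2" thus "(2::'a) = 0" using of_nat_eq_0_iff_char_dvd[of 2, where 'a='a] by simp
next
  assume h: "(2::'a) = 0"
  hence "CHAR('a) dvd 2" using of_nat_eq_0_iff_char_dvd[of 2, where 'a='a] by simp
  moreover have "CHAR('a) \<noteq> 1" using of_nat_eq_0_iff_char_dvd[of 1, where 'a='a] by auto
  moreover have "CHAR('a) \<noteq> 0" using \<open>CHAR('a) dvd 2\<close> by (metis dvd_0_left_iff zero_neq_numeral)
  moreover have "CHAR('a) \<le> 2" using \<open>CHAR('a) dvd 2\<close> by (simp add: dvd_imp_le)
  ultimately show "CHAR('a) = 2" by linarith
qed


abbreviation X :: "'a::field laurent" where "X \<equiv> Poly_Mapping.single 1 1"
abbreviation Xi :: "'a::field laurent" where "Xi \<equiv> Poly_Mapping.single (-1) 1"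

lemma X_Xi_ne: "(X::'a::field laurent) - Xi \<noteq> 0"
proof
  assume "(X::'a laurent) - Xi = 0"
  hence "Poly_Mapping.lookup ((X::'a laurent) - Xi) 1 = 0" by simp
  thus False by (simp add: lookup_minus lookup_single when_def)
qed

lemma c2_derived1: assumes c2: "(2::'a::field) = 0"
  shows "derived (L::'a lmat2 set) 1 \<subseteq> {A. A$1$1 = A$2$2}"
proof -
  have "lie_bracket (A::'a lmat2) B \<in> {A. A$1$1 = A$2$2}" for A B
  proof -
    have "lie_bracket A B = lie_bracket (M (A$1$1) (A$1$2) (A$2$1) (A$2$2)) (M (B$1$1) (B$1$2) (B$2$1) (B$2$2))"
      using M_eta[of A] M_eta[of B] by simp
    also have "\<dots> $1$1 = \<dots> $2$2"
      unfolding M_bracket M_nth using char2_neg[OF c2]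
      by (metis minus_diff_eq mult.commute)
    finally show ?thesis by simp
  qed
  thus ?thesis unfolding One_nat_def derived.simps lie_brk_set_def
    by (intro kspan_sub) (auto simp: ksmul_def vec_eq_iff)
qed

lemma c2_derived2: assumes c2: "(2::'a::field) = 0"
  shows "derived (L::'a lmat2 set) 2 \<subseteq> {A. A$1$2 = 0 \<and> A$2$1 = 0 \<and> A$1$1 = A$2$2}"
proof -
  have "lie_bracket (A::'a lmat2) B \<in> {A. A$1$2 = 0 \<and> A$2$1 = 0 \<and> A$1$1 = A$2$2}"
    if "A \<in> derived L 1" "B \<in> derived L 1" for A B
  proof -
    have a: "A$1$1 = A$2$2" "B$1$1 = B$2$2" using that c2_derived1[OF c2] by auto
    have "lie_bracket A B = lie_bracket (M (A$2$2) (A$1$2) (A$2$1) (A$2$2)) (M (B$2$2) (B$1$2) (B$2$1) (B$2$2))"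
      using M_eta[of A] M_eta[of B] a by simp
    also have "\<dots> \<in> {A. A$1$2 = 0 \<and> A$2$1 = 0 \<and> A$1$1 = A$2$2}"
      unfolding M_bracket M_nth using char2_neg[OF c2]
      by (simp add: algebra_simps) (metis minus_diff_eq mult.commute)
    finally show ?thesis .
  qed
  thus ?thesis unfolding numeral_2_eq_2 derived.simps(2) lie_brk_set_def One_nat_def[symmetric]
    by (intro kspan_sub) (auto simp: ksmul_def vec_eq_iff)
qed

lemma c2_derived3: assumes c2: "(2::'a::field) = 0"
  shows "derived (L::'a lmat2 set) 3 = {0}"
proof -
  have "lie_bracket (A::'a lmat2) B \<in> {0}"
    if "A \<in> derived L 2" "B \<in> derived L 2" for A B
  proof -
    have a: "A$1$2 = 0" "A$2$1 = 0" "A$1$1 = A$2$2" "B$1$2 = 0" "B$2$1 = 0" "B$1$1 = B$2$2"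
      using that c2_derived2[OF c2] by auto
    have "lie_bracket A B = lie_bracket (M (A$2$2) 0 0 (A$2$2)) (M (B$2$2) 0 0 (B$2$2))"
      using M_eta[of A] M_eta[of B] a by simp
    also have "\<dots> = 0" unfolding M_bracket M_zero M_eq by (simp add: algebra_simps)
    finally show ?thesis by simp
  qed
  hence "derived L 3 \<subseteq> {0}" unfolding numeral_3_eq_3 derived.simps(2) lie_brk_set_def numeral_2_eq_2[symmetric]
    by (intro kspan_sub) (auto simp: ksmul_def vec_eq_iff)
  moreover have "0 \<in> derived L 3" unfolding numeral_3_eq_3 derived.simps(2) lie_brk_set_def
    by (rule kspan_zero)
  ultimately show ?thesis by auto
qed

definition O2 :: "'a::field laurent \<Rightarrow> 'a lmat2" where "O2 b = M 0 b (lbar b) 0"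

lemma c2_skew: assumes c2: "(2::'a::field) = 0"
  shows "O2 b \<in> (skewK :: 'a lmat2 set)" "M 1 0 0 0 \<in> (skewK :: 'a lmat2 set)" "M 0 0 0 1 \<in> (skewK :: 'a lmat2 set)"
  unfolding skewK_def by (simp_all add: O2_def M_natinv M_uminus M_eq char2_neg[OF c2])

lemma c2_O_derived1: assumes c2: "(2::'a::field) = 0"
  shows "O2 b \<in> derived (skewK :: 'a lmat2 set) 1"
proof -
  have "lie_bracket (M 1 0 0 0) (O2 b) = O2 b"
    unfolding O2_def M_bracket M_eq by (simp add: char2_neg[OF c2])
  thus ?thesis using brk_mem[OF c2_skew(2)[OF c2] c2_skew(1)[OF c2], of b] by simp
qed

lemma c2_derived2_ne: assumes c2: "(2::'a::field) = 0"
  shows "derived (skewK :: 'a lmat2 set) 2 \<noteq> {0}"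
proof -
  have "lie_bracket (O2 1) (O2 X) = M (Xi - X) 0 0 (X - Xi)"
    unfolding O2_def M_bracket M_eq by simp
  moreover have "M (Xi - X) 0 0 (X - Xi) \<noteq> (0::'a lmat2)"
    unfolding M_zero M_eq using X_Xi_ne by (metis right_minus_eq)
  moreover have "lie_bracket (O2 1) (O2 X) \<in> derived (skewK :: 'a lmat2 set) 2"
    unfolding numeral_2_eq_2 derived.simps(2) One_nat_def[symmetric]
    by (intro brk_mem c2_O_derived1[OF c2])
  ultimately show ?thesis by (metis singletonD)
qed

lemma c2_lower: assumes c2: "(2::'a::field) = 0"
  shows "O2 b \<in> lower_central (skewK :: 'a lmat2 set) n"
proof (induction n arbitrary: b)
  case 0 thus ?case using c2_skew[OF c2] by simp
next
  case (Suc n)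
  have "lie_bracket (O2 b) (M 0 0 0 1) = O2 b"
    unfolding O2_def M_bracket M_eq by (simp add: char2_neg[OF c2])
  thus ?case using brk_mem[OF Suc.IH[of b] c2_skew(3)[OF c2]] by simp
qed



lemma two_ne: assumes "(2::'a::field) \<noteq> 0" shows "(2::'a laurent) \<noteq> 0"
proof
  assume "(2::'a laurent) = 0"
  have "Poly_Mapping.single (0::int) (2::'a) = (2::'a laurent)" by (rule two_laurent[symmetric])
  also have "\<dots> = 0" by fact
  finally have "Poly_Mapping.single (0::int) (2::'a) = 0" .
  hence "Poly_Mapping.lookup (Poly_Mapping.single (0::int) (2::'a)) 0 = 0" by (simp only: lookup_zero)
  thus False using assms by (simp only: lookup_single_eq)
qed

lemma nc2_inv: assumes nc2: "(2::'a::field) \<noteq> 0"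
  shows "\<exists>b c b' c' w. M 0 b c 0 \<in> derived (skewK :: 'a lmat2 set) n \<and> M 0 b' c' 0 \<in> derived (skewK :: 'a lmat2 set) n
     \<and> M w 0 0 (-w) \<in> derived (skewK :: 'a lmat2 set) n \<and> w \<noteq> 0 \<and> b*c' - b'*c \<noteq> 0"
proof (induction n)
  case 0
  have s1: "M 0 1 (-1) 0 \<in> (skewK :: 'a lmat2 set)" unfolding skewK_def
    by (simp add: M_natinv M_uminus M_eq)
  have s2: "M 0 X (-Xi) 0 \<in> (skewK :: 'a lmat2 set)" unfolding skewK_def
    by (simp add: M_natinv M_uminus M_eq)
  have s3: "M (X - Xi) 0 0 (-(X - Xi)) \<in> (skewK :: 'a lmat2 set)" unfolding skewK_def
    by (simp add: M_natinv M_uminus M_eq)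
  have eq: "1 * (-Xi) - X * (-1) = (X::'a laurent) - Xi" by simp
  show ?case unfolding derived.simps(1)
    apply (rule exI[of _ "1::'a laurent"], rule exI[of _ "-1::'a laurent"], rule exI[of _ "X::'a laurent"], rule exI[of _ "-Xi::'a laurent"], rule exI[of _ "X - Xi::'a laurent"])
    apply (intro conjI)
    apply (rule s1)
    apply (rule s2)
    apply (rule s3)
    apply (rule X_Xi_ne)
    apply (subst eq) apply (rule X_Xi_ne)
    done
next
  case (Suc n)
  then obtain b c b' c' w where h: "M 0 b c 0 \<in> derived (skewK :: 'a lmat2 set) n" "M 0 b' c' 0 \<in> derived (skewK :: 'a lmat2 set) n"
     "M w 0 0 (-w) \<in> derived (skewK :: 'a lmat2 set) n" "w \<noteq> 0" "b*c' - b'*c \<noteq> 0" by blast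
  have e1: "lie_bracket (M w 0 0 (-w)) (M 0 b c 0) = M 0 (2 * w * b) (-(2 * w * c)) 0"
    unfolding M_bracket M_eq by (simp add: algebra_simps mult_2)
  have e2: "lie_bracket (M w 0 0 (-w)) (M 0 b' c' 0) = M 0 (2 * w * b') (-(2 * w * c')) 0"
    unfolding M_bracket M_eq by (simp add: algebra_simps mult_2)
  have e3: "lie_bracket (M 0 b c 0) (M 0 b' c' 0) = M (b*c' - b'*c) 0 0 (-(b*c' - b'*c))"
    unfolding M_bracket M_eq by (simp add: algebra_simps)
  have nz: "(2 * w * b) * (-(2 * w * c')) - (2 * w * b') * (-(2 * w * c)) = - (2*2 * w * w*(b*c' - b'*c))"
    by (simp add: algebra_simps)
  have "2*2 * w * w*(b*c' - b'*c) \<noteq> 0" using two_ne[OF nc2] h(4,5) by (metis mult_eq_0_iff)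
  hence nz2: "(2 * w * b) * (-(2 * w * c')) - (2 * w * b') * (-(2 * w * c)) \<noteq> 0" unfolding nz by simp
  have m1: "M 0 (2 * w * b) (-(2 * w * c)) 0 \<in> derived (skewK :: 'a lmat2 set) (Suc n)"
    unfolding derived.simps(2) e1[symmetric] by (rule brk_mem[OF h(3) h(1)])
  have m2: "M 0 (2 * w * b') (-(2 * w * c')) 0 \<in> derived (skewK :: 'a lmat2 set) (Suc n)"
    unfolding derived.simps(2) e2[symmetric] by (rule brk_mem[OF h(3) h(2)])
  have m3: "M (b*c' - b'*c) 0 0 (-(b*c' - b'*c)) \<in> derived (skewK :: 'a lmat2 set) (Suc n)"
    unfolding derived.simps(2) e3[symmetric] by (rule brk_mem[OF h(1) h(2)])
  show ?case using m1 m2 m3 nz2 h(5) by blast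
qed

lemma nc2_not_solvable: assumes nc2: "(2::'a::field) \<noteq> 0"
  shows "\<not> lie_solvable (skewK :: 'a lmat2 set)"
proof
  assume "lie_solvable (skewK :: 'a lmat2 set)"
  then obtain n where "derived (skewK :: 'a lmat2 set) n = {0}" unfolding lie_solvable_def by blast
  moreover obtain b c b' c' w where "M 0 b c 0 \<in> derived (skewK :: 'a lmat2 set) n" "b*c' - b'*c \<noteq> 0"
    using nc2_inv[OF nc2, of n] by blast
  ultimately have "M 0 b c 0 = 0" by blast
  hence "b = 0" "c = 0" by simp_all
  thus False using \<open>b*c' - b'*c \<noteq> 0\<close> by simp
qed

lemma ne_single0: "x \<in> S \<Longrightarrow> x \<noteq> 0 \<Longrightarrow> S \<noteq> {0}" by auto

lemma O2_1_ne: "O2 (1::'a::field laurent) \<noteq> 0" unfolding O2_def M_eq_0 by simp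

theorem corollary3p3:
  shows "(CHAR('a::field) = 2 \<longrightarrow>
            lie_solvable (skewK :: 'a lmat2 set) \<and> solvability_index (skewK :: 'a lmat2 set) = 3
            \<and> \<not> lie_nilpotent (skewK :: 'a lmat2 set))
       \<and> (CHAR('a) \<noteq> 2 \<longrightarrow> \<not> lie_solvable (skewK :: 'a lmat2 set))"
proof (intro conjI impI)
  assume "CHAR('a) \<noteq> 2" thus "\<not> lie_solvable (skewK :: 'a lmat2 set)"
    using nc2_not_solvable char2_iff by blast
next
  assume "CHAR('a) = 2"
  hence c2: "(2::'a) = 0" using char2_iff by blast
  show "lie_solvable (skewK :: 'a lmat2 set)" unfolding lie_solvable_def using c2_derived3[OF c2] by blast
  have ne2: "derived (skewK :: 'a lmat2 set) 2 \<noteq> {0}" by (rule c2_derived2_ne[OF c2])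
  have ne1: "derived (skewK :: 'a lmat2 set) 1 \<noteq> {0}"
  proof -
    have "O2 1 \<in> derived (skewK :: 'a lmat2 set) 1" by (rule c2_O_derived1[OF c2])
    thus ?thesis using O2_1_ne by (rule ne_single0)
  qed
  have ne0: "derived (skewK :: 'a lmat2 set) 0 \<noteq> {0}"
  proof -
    have "O2 1 \<in> derived (skewK :: 'a lmat2 set) 0" using c2_skew[OF c2] by simp
    thus ?thesis using O2_1_ne by (rule ne_single0)
  qed
  show "solvability_index (skewK :: 'a lmat2 set) = 3" unfolding solvability_index_def
  proof (rule Least_equality)
    show "derived (skewK :: 'a lmat2 set) 3 = {0}" by (rule c2_derived3[OF c2])
  next
    fix m assume "derived (skewK :: 'a lmat2 set) m = {0}"
    hence "m \<noteq> 0" "m \<noteq> 1" "m \<noteq> 2" using ne0 ne1 ne2 by metis+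
    thus "3 \<le> m" by linarith
  qed
  show "\<not> lie_nilpotent (skewK :: 'a lmat2 set)"
  proof
    assume "lie_nilpotent (skewK :: 'a lmat2 set)"
    then obtain n where "lower_central (skewK :: 'a lmat2 set) n = {0}" unfolding lie_nilpotent_def by blast
    moreover have "O2 1 \<in> lower_central (skewK :: 'a lmat2 set) n" by (rule c2_lower[OF c2])
    ultimately show False using O2_1_ne by (metis singletonD)
  qed
qed

end
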